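(* Let $f=a_0+a_1 z+\cdots+a_mz^m\in \mathbb{Z}[z]$ be primitive (the greatest common divisor of its coefficients is $1$). Suppose there exist positive real numbers $\alpha<\beta$ and an index $j\in\{0,1,\ldots,m\}$ such that \[ |a_j|\alpha^j >\left(\frac{\beta}{\alpha}\right)^{m-j}\sum_{i=0,\, i\neq j}^m |a_i|\alpha^i. \] Further, suppose there exist natural numbers $n$, $d$, $k$, $\ell\leq m$, and a prime $p$ with $p\nmid d$ such that $\beta-d\geq n\geq \alpha+d$, $f(n)=\pm p^k d$, $\gcd(k,\ell)=1$, $p^k$ divides $\frac{f^{(i)}(n)}{i!}$ for each $i=0, 1, \ldots,\ell-1$, and, in case $k>1$, also $p\nmid \frac{f^{(\ell)}(n)}{\ell!}$. Then $f$ is irreducible in $\mathbb{Z}[z]$.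
   Context: $f^{(i)}$ denotes the $i$-th derivative of $f$ with respect to $z$. Natural numbers are positive integers. *)

theory Defs
  imports "HOL-Computational_Algebra.Polynomial_Factorial"
begin

text \<open>The i-th derivative of f evaluated at x, divided by i! (an exact integer division).\<close>
definition taylor_coeff_at :: "int poly \<Rightarrow> nat \<Rightarrow> int \<Rightarrow> int" where
  "taylor_coeff_at f i x = poly ((pderiv ^^ i) f) x div fact i"

end

theory Submission
  imports Defs "HOL-Computational_Algebra.Fundamental_Theorem_Algebra"
begin


lemma annulus:
  fixes f :: "int poly" and \<alpha> \<beta> :: real and z :: complex
  assumes ab: "0 < \<alpha>" "\<alpha> < \<beta>"
    and j: "j \<le> degree f"
    and dom: "\<bar>coeff f j\<bar> * \<alpha> ^ j >
              (\<beta> / \<alpha>) ^ (degree f - j) *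
              (\<Sum>i\<in>{0..degree f} - {j}. \<bar>coeff f i\<bar> * \<alpha> ^ i)"
    and r: "\<alpha> \<le> norm z" "norm z \<le> \<beta>"
  shows "poly (map_poly of_int f) z \<noteq> 0"
proof
  assume z0: "poly (map_poly of_int f) z = 0"
  define m where "m = degree f"
  define t where "t = norm z / \<alpha>"
  define s where "s = \<beta> / \<alpha>"
  have t1: "t \<ge> 1" using ab r unfolding t_def by (simp add: field_simps)
  have ts: "t \<le> s" using ab r unfolding t_def s_def by (simp add: divide_right_mono)
  have key: "\<bar>coeff f i\<bar> * norm z ^ i \<le> t ^ j * s ^ (m - j) * (\<bar>coeff f i\<bar> * \<alpha> ^ i)"
    if i: "i \<in> {0..m} - {j}" for i
  proof -
    have nz: "norm z ^ i = \<alpha> ^ i * t ^ i" using ab unfolding t_def by (simp add: power_divide)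
    have "t ^ i \<le> t ^ j * s ^ (m - j)"
    proof (cases "i \<le> j")
      case True
      have "t ^ i \<le> t ^ j" using True t1 by (simp add: power_increasing)
      also have "\<dots> \<le> t ^ j * s ^ (m - j)" using t1 ts
        by (simp add: one_le_power)
      finally show ?thesis .
    next
      case False
      have "t ^ i = t ^ j * t ^ (i - j)" using False by (simp add: power_add[symmetric])
      also have "\<dots> \<le> t ^ j * s ^ (i - j)" using t1 ts
        by (intro mult_left_mono power_mono) auto
      also have "\<dots> \<le> t ^ j * s ^ (m - j)" using t1 ts i False
        by (intro mult_left_mono power_increasing) auto
      finally show ?thesis .
    qed
    hence "\<bar>coeff f i\<bar> * \<alpha> ^ i * t ^ i \<le> \<bar>coeff f i\<bar> * \<alpha> ^ i * (t ^ j * s ^ (m - j))"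
      using ab by (intro mult_left_mono) auto
    thus ?thesis unfolding nz by (simp add: algebra_simps)
  qed
  have S: "(\<Sum>i\<in>{0..m} - {j}. \<bar>coeff f i\<bar> * norm z ^ i) \<le>
      t ^ j * s ^ (m - j) * (\<Sum>i\<in>{0..m} - {j}. \<bar>coeff f i\<bar> * \<alpha> ^ i)"
    unfolding sum_distrib_left by (rule sum_mono) (rule key)
  have tj: "t ^ j > 0" using t1 by simp
  have S2: "t ^ j * s ^ (m - j) * (\<Sum>i\<in>{0..m} - {j}. \<bar>coeff f i\<bar> * \<alpha> ^ i)
     < t ^ j * (\<bar>coeff f j\<bar> * \<alpha> ^ j)"
    using mult_strict_left_mono[OF dom tj] unfolding m_def s_def by (simp add: mult.assoc)
  have nzj: "t ^ j * (\<bar>coeff f j\<bar> * \<alpha> ^ j) = \<bar>coeff f j\<bar> * norm z ^ j"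
    using ab unfolding t_def by (simp add: power_divide)
  have dm: "degree (map_poly (of_int :: int \<Rightarrow> complex) f) = m" unfolding m_def
    by (simp add: degree_map_poly)
  have "poly (map_poly of_int f) z = (\<Sum>i\<le>m. of_int (coeff f i) * z ^ i)"
    by (simp add: poly_altdef dm coeff_map_poly)
  also have "\<dots> = of_int (coeff f j) * z ^ j + (\<Sum>i\<in>{0..m} - {j}. of_int (coeff f i) * z ^ i)"
    using j unfolding m_def by (subst sum.remove[of _ j]) (auto simp: atLeast0AtMost)
  finally have eq: "of_int (coeff f j) * z ^ j = - (\<Sum>i\<in>{0..m} - {j}. of_int (coeff f i) * z ^ i)"
    using z0 by (simp add: eq_neg_iff_add_eq_0)
  have "\<bar>coeff f j\<bar> * norm z ^ j = norm (of_int (coeff f j) * z ^ j :: complex)"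
    by (simp add: norm_mult norm_power)
  also have "\<dots> \<le> (\<Sum>i\<in>{0..m} - {j}. norm (of_int (coeff f i) * z ^ i :: complex))"
    unfolding eq norm_minus_cancel by (rule norm_sum)
  also have "\<dots> = (\<Sum>i\<in>{0..m} - {j}. \<bar>coeff f i\<bar> * norm z ^ i)"
    by (simp add: norm_mult norm_power)
  finally show False using S S2 nzj by linarith
qed



lemma map_of_int_mult:
  "map_poly (of_int :: int \<Rightarrow> 'a :: comm_ring_1) (p * q) = map_poly of_int p * map_poly of_int q"
  by (intro poly_eqI) (simp add: coeff_map_poly coeff_mult)

lemma poly_map_of_int:
  "poly (map_poly (of_int :: int \<Rightarrow> 'a :: comm_ring_1) p) (of_int x) = of_int (poly p x)"
  by (induction p) (simp_all add: map_poly_pCons)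

lemma factor_big:
  fixes g f :: "int poly" and \<alpha> \<beta> :: real and n d :: nat
  assumes gf: "g dvd f" and f0: "f \<noteq> 0" and dg: "degree g \<ge> 1"
    and roots: "\<And>z. poly (map_poly of_int f) z = (0::complex) \<Longrightarrow> norm z < \<alpha> \<or> norm z > \<beta>"
    and nb: "\<beta> - real d \<ge> real n" "real n \<ge> \<alpha> + real d" and d1: "d \<ge> 1"
  shows "\<bar>poly g (int n)\<bar> > int d"
proof -
  define G where "G = map_poly (of_int :: int \<Rightarrow> complex) g"
  have degG: "degree G = degree g" unfolding G_def by (simp add: degree_map_poly)
  have lcG: "lead_coeff G = of_int (lead_coeff g)" unfolding G_def
    by (simp add: degree_map_poly coeff_map_poly)
  have g0: "g \<noteq> 0" using gf f0 by auto
  obtain q where fq: "f = g * q" using gf by (auto elim: dvdE)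
  obtain root where dec: "smult (lead_coeff G) (\<Prod>i<degree G. [:-root i, 1:]) = G"
    using complex_poly_decompose' by blast
  have rootG: "poly G (root i) = 0" if "i < degree G" for i
  proof -
    have "poly G (root i) = lead_coeff G * (\<Prod>k<degree G. root i - root k)"
      by (subst dec[symmetric]) (simp add: poly_prod)
    also have "(\<Prod>k<degree G. root i - root k) = 0"
      using that by (intro prod_zero) auto
    finally show ?thesis by simp
  qed
  have far: "norm (of_nat n - root i) > real d" if "i < degree G" for i
  proof -
    have "poly (map_poly of_int f) (root i) = 0"
      using rootG[OF that] unfolding fq map_of_int_mult G_def by simp
    from roots[OF this] show ?thesis
    proof
      assume "norm (root i) < \<alpha>"
      moreover have "norm (of_nat n :: complex) - norm (root i) \<le> norm (of_nat n - root i)"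
        by (rule norm_triangle_ineq2)
      ultimately show ?thesis using nb by simp
    next
      assume "norm (root i) > \<beta>"
      moreover have "norm (root i) - norm (of_nat n :: complex) \<le> norm (of_nat n - root i)"
        by (metis norm_minus_commute norm_triangle_ineq2)
      ultimately show ?thesis using nb by simp
    qed
  qed
  define D where "D = degree G - 1"
  have D: "degree G = Suc D" using dg degG unfolding D_def by simp
  have P1: "(\<Prod>i<D. norm (of_nat n - root i)) \<ge> 1"
  proof (intro prod_ge_1)
    fix i assume "i \<in> {..<D}"
    hence "norm (of_nat n - root i) > real d" using far D by simp
    thus "1 \<le> norm (of_nat n - root i)" using d1 by linarith
  qed
  have "poly G (of_nat n) = lead_coeff G * (\<Prod>i<degree G. of_nat n - root i)"
    by (subst dec[symmetric]) (simp add: poly_prod)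
  hence "norm (poly G (of_nat n)) = norm (lead_coeff G) * ((\<Prod>i<D. norm (of_nat n - root i)) * norm (of_nat n - root D))"
    unfolding D prod.lessThan_Suc by (simp only: norm_mult prod_norm)
  also have "\<dots> \<ge> 1 * (1 * norm (of_nat n - root D))"
  proof -
    have "norm (lead_coeff G) = \<bar>of_int (lead_coeff g)\<bar>" unfolding lcG by (simp only: norm_of_int)
    moreover have "lead_coeff g \<noteq> 0" using g0 by simp
    ultimately have l1: "norm (lead_coeff G) \<ge> 1" by linarith
    show ?thesis using P1 l1 by (intro mult_mono) auto
  qed
  finally have "norm (poly G (of_nat n)) > real d" using far[of D] D by simp
  moreover have "poly G (of_nat n) = of_int (poly g (int n))"
    unfolding G_def using poly_map_of_int[of g "int n"] by simp
  ultimately show ?thesis by simp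
qed



lemma wmax:
  fixes G :: "int poly" and w :: "nat \<Rightarrow> nat"
  assumes G0: "G \<noteq> 0"
  obtains I where "coeff G I \<noteq> 0" "\<And>i. coeff G i \<noteq> 0 \<Longrightarrow> w i \<ge> w I"
    "\<And>i. i > I \<Longrightarrow> coeff G i \<noteq> 0 \<Longrightarrow> w i > w I"
proof -
  define S where "S = {i. coeff G i \<noteq> 0}"
  have fS: "finite S" unfolding S_def
    by (rule finite_subset[of _ "{..degree G}"]) (auto intro: le_degree)
  have nS: "degree G \<in> S" using G0 unfolding S_def by simp
  define m where "m = Min (w ` S)"
  define T where "T = {i\<in>S. w i = m}"
  have fT: "finite T" using fS unfolding T_def by simp
  have "m \<in> w ` S" unfolding m_def using fS nS by (intro Min_in) auto
  hence nT: "T \<noteq> {}" unfolding T_def by auto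
  define I where "I = Max T"
  have IT: "I \<in> T" unfolding I_def using fT nT by (rule Max_in)
  have mle: "w i \<ge> m" if "i \<in> S" for i unfolding m_def using fS that by simp
  show ?thesis
  proof
    show "coeff G I \<noteq> 0" using IT unfolding T_def S_def by simp
    show "w i \<ge> w I" if "coeff G i \<noteq> 0" for i
      using mle[of i] IT that unfolding T_def S_def by simp
    show "w i > w I" if "i > I" "coeff G i \<noteq> 0" for i
    proof -
      have "i \<notin> T" using that Max_ge[OF fT, of i] unfolding I_def by auto
      thus ?thesis using mle[of i] IT that unfolding T_def S_def by auto
    qed
  qed
qed

lemma term_dvd:
  fixes P x y :: int and l k e i j mG mH :: nat
  assumes P: "prime P" and x: "x \<noteq> 0" and y: "y \<noteq> 0"
    and wx: "l * multiplicity P x + k * i + l * multiplicity P y + k * j > mG + mH"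
    and e: "l * e + k * (i + j) \<le> mG + mH"
  shows "P ^ Suc e dvd x * y"
proof -
  have m: "multiplicity P (x * y) = multiplicity P x + multiplicity P y"
    using P x y by (intro prime_elem_multiplicity_mult_distrib) auto
  have "l * e < l * multiplicity P (x * y)" using wx e unfolding m by (simp add: algebra_simps)
  hence "e < multiplicity P (x * y)" by simp
  thus ?thesis by (intro multiplicity_dvd') simp
qed

lemma prodw:
  fixes G H :: "int poly" and P :: int and l k IG IH :: nat
  assumes P: "prime P"
    and G: "coeff G IG \<noteq> 0" "\<And>i. coeff G i \<noteq> 0 \<Longrightarrow>
        l * multiplicity P (coeff G i) + k * i \<ge> l * multiplicity P (coeff G IG) + k * IG"
      "\<And>i. i > IG \<Longrightarrow> coeff G i \<noteq> 0 \<Longrightarrow>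
        l * multiplicity P (coeff G i) + k * i > l * multiplicity P (coeff G IG) + k * IG"
    and H: "coeff H IH \<noteq> 0" "\<And>i. coeff H i \<noteq> 0 \<Longrightarrow>
        l * multiplicity P (coeff H i) + k * i \<ge> l * multiplicity P (coeff H IH) + k * IH"
      "\<And>i. i > IH \<Longrightarrow> coeff H i \<noteq> 0 \<Longrightarrow>
        l * multiplicity P (coeff H i) + k * i > l * multiplicity P (coeff H IH) + k * IH"
  shows "coeff (G * H) (IG + IH) \<noteq> 0 \<and> multiplicity P (coeff (G * H) (IG + IH)) =
           multiplicity P (coeff G IG) + multiplicity P (coeff H IH)"
    and "\<And>N e. N > IG + IH \<Longrightarrow>
          l * e + k * N \<le> (l * multiplicity P (coeff G IG) + k * IG) + (l * multiplicity P (coeff H IH) + k * IH)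
          \<Longrightarrow> P ^ Suc e dvd coeff (G * H) N"
proof -
  define mG where "mG = l * multiplicity P (coeff G IG) + k * IG"
  define mH where "mH = l * multiplicity P (coeff H IH) + k * IH"
  define e0 where "e0 = multiplicity P (coeff G IG) + multiplicity P (coeff H IH)"
  have me0: "l * e0 + k * (IG + IH) = mG + mH" unfolding e0_def mG_def mH_def by (simp add: algebra_simps)
  have termdvd: "P ^ Suc e dvd coeff G i * coeff H j"
    if ij: "i > IG \<or> j > IH" and e: "l * e + k * (i + j) \<le> mG + mH" for i j e
  proof (cases "coeff G i = 0 \<or> coeff H j = 0")
    case True thus ?thesis by auto
  next
    case False
    hence gi: "coeff G i \<noteq> 0" and hj: "coeff H j \<noteq> 0" by auto
    have "l * multiplicity P (coeff G i) + k * i + (l * multiplicity P (coeff H j) + k * j) > mG + mH"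
    proof (cases "i > IG")
      case True
      thus ?thesis using G(3)[OF True gi] H(2)[OF hj] unfolding mG_def mH_def by linarith
    next
      case False
      hence "j > IH" using ij by auto
      thus ?thesis using G(2)[OF gi] H(3)[OF _ hj] unfolding mG_def mH_def by fastforce
    qed
    thus ?thesis using term_dvd[OF P gi hj _ e] by (simp add: add.assoc)
  qed
  show "P ^ Suc e dvd coeff (G * H) N" if N: "N > IG + IH"
    and e: "l * e + k * N \<le> (l * multiplicity P (coeff G IG) + k * IG) + (l * multiplicity P (coeff H IH) + k * IH)" for N e
    unfolding coeff_mult
  proof (intro dvd_sum)
    fix i assume i: "i \<in> {..N}"
    have "i > IG \<or> N - i > IH" using N i by auto
    moreover have "l * e + k * (i + (N - i)) \<le> mG + mH" using e i unfolding mG_def mH_def by simp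
    ultimately show "P ^ Suc e dvd coeff G i * coeff H (N - i)" by (rule termdvd)
  qed
  define N0 where "N0 = IG + IH"
  have split: "coeff (G * H) N0 = coeff G IG * coeff H IH + (\<Sum>i\<in>{..N0} - {IG}. coeff G i * coeff H (N0 - i))"
    unfolding coeff_mult N0_def by (subst sum.remove[of _ IG]) auto
  have rest: "P ^ Suc e0 dvd (\<Sum>i\<in>{..N0} - {IG}. coeff G i * coeff H (N0 - i))"
  proof (intro dvd_sum)
    fix i assume i: "i \<in> {..N0} - {IG}"
    have "i > IG \<or> N0 - i > IH" using i unfolding N0_def by auto
    moreover have "l * e0 + k * (i + (N0 - i)) \<le> mG + mH" using me0 i unfolding N0_def by simp
    ultimately show "P ^ Suc e0 dvd coeff G i * coeff H (N0 - i)" by (rule termdvd)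
  qed
  have mm: "multiplicity P (coeff G IG * coeff H IH) = e0"
    unfolding e0_def using P G(1) H(1) by (intro prime_elem_multiplicity_mult_distrib) auto
  have d1: "P ^ e0 dvd coeff G IG * coeff H IH" using multiplicity_dvd[of P "coeff G IG * coeff H IH"] mm by simp
  have d2: "\<not> P ^ Suc e0 dvd coeff G IG * coeff H IH"
  proof
    assume "P ^ Suc e0 dvd coeff G IG * coeff H IH"
    hence "multiplicity P (coeff G IG * coeff H IH) \<ge> Suc e0"
      using P G(1) H(1) by (intro multiplicity_geI) (auto simp: not_prime_unit)
    thus False using mm by simp
  qed
  have A: "P ^ e0 dvd coeff (G * H) N0" unfolding split
    using d1 dvd_trans[OF le_imp_power_dvd[of e0 "Suc e0" P] rest] by (intro dvd_add) auto
  have B: "\<not> P ^ Suc e0 dvd coeff (G * H) N0" unfolding split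
    using d2 rest by (simp add: dvd_add_left_iff)
  have "coeff (G * H) N0 \<noteq> 0" using B by auto
  moreover have "multiplicity P (coeff (G * H) N0) = e0" using A B by (rule multiplicity_eqI)
  ultimately show "coeff (G * H) (IG + IH) \<noteq> 0 \<and> multiplicity P (coeff (G * H) (IG + IH)) =
           multiplicity P (coeff G IG) + multiplicity P (coeff H IH)" unfolding N0_def e0_def by simp
qed

lemma core:
  fixes G H :: "int poly" and P :: int and k l :: nat
  assumes P: "prime P" and G0: "G \<noteq> 0" and H0: "H \<noteq> 0" and k1: "k \<ge> 1" and l1: "l \<ge> 1"
    and cop: "coprime l k"
    and g0: "coeff G 0 \<noteq> 0" and h0: "coeff H 0 \<noteq> 0"
    and a1: "multiplicity P (coeff G 0) \<ge> 1" and b1: "multiplicity P (coeff H 0) \<ge> 1"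
    and abk: "multiplicity P (coeff G 0) + multiplicity P (coeff H 0) = k"
    and mid: "\<And>i. 0 < i \<Longrightarrow> i < l \<Longrightarrow> P ^ k dvd coeff (G * H) i"
    and top: "\<not> P dvd coeff (G * H) l"
  shows False
proof -
  define a where "a = multiplicity P (coeff G 0)"
  define b where "b = multiplicity P (coeff H 0)"
  obtain IG where IG: "coeff G IG \<noteq> 0" "\<And>i. coeff G i \<noteq> 0 \<Longrightarrow>
        l * multiplicity P (coeff G i) + k * i \<ge> l * multiplicity P (coeff G IG) + k * IG"
      "\<And>i. i > IG \<Longrightarrow> coeff G i \<noteq> 0 \<Longrightarrow>
        l * multiplicity P (coeff G i) + k * i > l * multiplicity P (coeff G IG) + k * IG"
    using wmax[OF G0, of "\<lambda>i. l * multiplicity P (coeff G i) + k * i"] by metis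
  obtain IH where IH: "coeff H IH \<noteq> 0" "\<And>i. coeff H i \<noteq> 0 \<Longrightarrow>
        l * multiplicity P (coeff H i) + k * i \<ge> l * multiplicity P (coeff H IH) + k * IH"
      "\<And>i. i > IH \<Longrightarrow> coeff H i \<noteq> 0 \<Longrightarrow>
        l * multiplicity P (coeff H i) + k * i > l * multiplicity P (coeff H IH) + k * IH"
    using wmax[OF H0, of "\<lambda>i. l * multiplicity P (coeff H i) + k * i"] by metis
  note pw = prodw[OF P IG IH]
  define vG where "vG = multiplicity P (coeff G IG)"
  define vH where "vH = multiplicity P (coeff H IH)"
  define mG where "mG = l * vG + k * IG"
  define mH where "mH = l * vH + k * IH"
  define N0 where "N0 = IG + IH"
  have c1: "coeff (G * H) N0 \<noteq> 0" "multiplicity P (coeff (G * H) N0) = vG + vH"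
    using pw(1) unfolding N0_def vG_def vH_def by auto
  have c2: "P ^ Suc e dvd coeff (G * H) N" if "N > N0" "l * e + k * N \<le> mG + mH" for N e
    using pw(2)[of N e] that unfolding N0_def mG_def mH_def vG_def vH_def by auto
  have mGa: "mG \<le> l * a" using IG(2)[OF g0] unfolding mG_def vG_def a_def by simp
  have mHb: "mH \<le> l * b" using IH(2)[OF h0] unfolding mH_def vH_def b_def by simp
  have abk': "a + b = k" using abk unfolding a_def b_def .
  have lk: "l * k = l * a + l * b" unfolding abk'[symmetric] by (simp add: algebra_simps)
  have sum0: "l * (vG + vH) + k * N0 = mG + mH" unfolding mG_def mH_def N0_def by (simp add: algebra_simps)
  consider "N0 = 0" | "0 < N0" "N0 < l" | "N0 = l" | "N0 > l" by linarith
  thus False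
  proof cases
    case 1
    hence "IG = 0" "IH = 0" unfolding N0_def by auto
    hence "mG + mH = l * (multiplicity P (coeff G 0) + multiplicity P (coeff H 0))"
      unfolding mG_def mH_def vG_def vH_def by (simp add: add_mult_distrib2)
    hence "mG + mH = l * k" using abk by simp
    hence "P ^ Suc 0 dvd coeff (G * H) l" using c2[of l 0] 1 l1 by (simp add: mult.commute)
    thus False using top by simp
  next
    case 2
    have "P ^ k dvd coeff (G * H) N0" using mid 2 by auto
    hence "multiplicity P (coeff (G * H) N0) \<ge> k"
      using P c1(1) by (intro multiplicity_geI) (auto simp: not_prime_unit)
    hence "l * (vG + vH) \<ge> l * k" using c1(2) by simp
    moreover have "k * N0 > 0" using 2 k1 by simp
    ultimately show False using sum0 mGa mHb abk' lk by linarith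
  next
    case 4
    have "k * N0 > k * l" using 4 k1 by simp
    hence "k * N0 > l * k" by (simp add: mult.commute)
    thus False using sum0 mGa mHb abk' lk by linarith
  next
    case 3
    have "mG + mH \<ge> l * k" using sum0 3 by (simp add: mult.commute)
    hence eqG: "mG = l * a" and eqH: "mH = l * b" using mGa mHb abk' lk by linarith+
    have IGl: "IG \<le> l" using 3 unfolding N0_def by simp
    consider "IG = 0" | "IG = l" | "0 < IG" "IG < l" using IGl by linarith
    thus False
    proof cases
      case 1
      hence "IH = l" using 3 unfolding N0_def by simp
      hence "l * vH + k * l = l * b" using eqH unfolding mH_def by simp
      hence "k * l \<le> b * l" by (metis le_add2 mult.commute)
      hence "k \<le> b" using l1 by simp
      thus False using abk' a1 unfolding a_def by simp
    next
      case 2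
      hence "l * vG + k * l = l * a" using eqG unfolding mG_def by simp
      hence "k * l \<le> a * l" by (metis le_add2 mult.commute)
      hence "k \<le> a" using l1 by simp
      thus False using abk' b1 unfolding b_def by simp
    next
      case 3
      have e: "l * vG + k * IG = l * a" using eqG unfolding mG_def by simp
      hence "k * IG = l * (a - vG)" by (simp add: diff_mult_distrib2)
      hence "l dvd IG * k" by (simp add: mult.commute)
      hence "l dvd IG" using cop coprime_dvd_mult_left_iff by blast
      hence "l \<le> IG" using 3 by (simp add: dvd_imp_le)
      thus False using 3 by simp
    qed
  qed
qed

lemma higher_pderiv_pcompose:
  "(pderiv ^^ i) (pcompose f [:x, 1:]) = pcompose ((pderiv ^^ i) f) [:x, 1:]"
  for f :: "int poly"
  by (induction i) (simp_all add: pderiv_pcompose pderiv_pCons)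

lemma taylor_coeff:
  fixes f :: "int poly"
  shows "coeff (pcompose f [:x, 1:]) i = taylor_coeff_at f i x"
proof -
  have "poly ((pderiv ^^ i) f) x = poly ((pderiv ^^ i) (pcompose f [:x, 1:])) 0"
    by (simp add: higher_pderiv_pcompose poly_pcompose)
  also have "\<dots> = fact i * coeff (pcompose f [:x, 1:]) i"
    by (simp add: poly_0_coeff_0 coeff_higher_pderiv pochhammer_fact)
  finally show ?thesis unfolding taylor_coeff_at_def by simp
qed


lemma deg_pos_of_content:
  fixes g :: "int poly"
  assumes "content g = 1" "\<not> is_unit g"
  shows "degree g \<ge> 1"
proof (rule ccontr)
  assume "\<not> degree g \<ge> 1"
  hence "degree g = 0" by simp
  then obtain c where gc: "g = [:c:]" by (meson degree_eq_zeroE)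
  hence "normalize c = 1" using assms(1) by (simp add: content_const)
  hence "is_unit c" by (metis is_unit_normalize normalize_1_iff)
  hence "is_unit g" unfolding gc by (metis is_unit_const_poly_iff)
  thus False using assms(2) by simp
qed

theorem theorem3:
  fixes f :: "int poly" and \<alpha> \<beta> :: real and j n d k l p :: nat
  assumes prim: "content f = 1"
    and ab: "0 < \<alpha>" "\<alpha> < \<beta>"
    and j: "j \<le> degree f"
    and dom: "\<bar>coeff f j\<bar> * \<alpha> ^ j >
              (\<beta> / \<alpha>) ^ (degree f - j) *
              (\<Sum>i\<in>{0..degree f} - {j}. \<bar>coeff f i\<bar> * \<alpha> ^ i)"
    and pos: "n \<ge> 1" "d \<ge> 1" "k \<ge> 1" "l \<ge> 1"
    and l: "l \<le> degree f"
    and p: "prime p" "\<not> p dvd d"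
    and nb: "\<beta> - real d \<ge> real n" "real n \<ge> \<alpha> + real d"
    and fn: "poly f (int n) = int (p ^ k * d) \<or> poly f (int n) = - int (p ^ k * d)"
    and cop: "gcd k l = 1"
    and dvd: "\<And>i. i < l \<Longrightarrow> int (p ^ k) dvd taylor_coeff_at f i (int n)"
    and ndvd: "k > 1 \<Longrightarrow> \<not> int p dvd taylor_coeff_at f l (int n)"
  shows "irreducible f"
proof (rule irreducibleI)
  have degf: "degree f \<ge> 1" using l pos by simp
  show f0: "f \<noteq> 0" using degf by auto
  show "\<not> is_unit f"
  proof
    assume "is_unit f"
    hence "degree f = 0" by (metis degree_pCons_0 is_unit_polyE)
    thus False using degf by simp
  qed
  have roots: "norm z < \<alpha> \<or> norm z > \<beta>" if "poly (map_poly of_int f) z = (0::complex)" for z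
    using annulus[OF ab j dom, of z] that by linarith
  define P where "P = int p"
  have P: "prime P" unfolding P_def using p by simp
  have Pd: "\<not> P dvd int d" unfolding P_def using p by simp
  have fP: "poly f (int n) = P ^ k * int d \<or> poly f (int n) = - (P ^ k * int d)"
    using fn unfolding P_def by simp
  fix g h assume fgh: "f = g * h"
  show "is_unit g \<or> is_unit h"
  proof (rule ccontr)
    assume nu: "\<not> (is_unit g \<or> is_unit h)"
    have cgh: "content g * content h = 1"
      using prim unfolding fgh content_mult .
    have cg: "content g = 1" and ch: "content h = 1" using cgh
      by (metis dvd_triv_left is_unit_content_iff, metis dvd_triv_right is_unit_content_iff)
    have dg: "degree g \<ge> 1" using deg_pos_of_content[OF cg] nu by simp
    have dh: "degree h \<ge> 1" using deg_pos_of_content[OF ch] nu by simp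
    have gbig: "\<bar>poly g (int n)\<bar> > int d"
      using factor_big[of g f, OF _ f0 dg roots nb pos(2)] fgh by simp
    have hbig: "\<bar>poly h (int n)\<bar> > int d"
      using factor_big[of h f, OF _ f0 dh roots nb pos(2)] fgh by simp
    have gh: "poly g (int n) * poly h (int n) = poly f (int n)" using fgh by simp
    have Pdiv: "P dvd x" if "x dvd P ^ k * int d" "\<bar>x\<bar> > int d" for x
    proof (rule ccontr)
      assume "\<not> P dvd x"
      hence "coprime P x" using P by (simp add: prime_imp_coprime)
      hence "coprime x (P ^ k)" by (simp add: coprime_commute)
      hence "x dvd int d" using that(1) by (simp add: coprime_dvd_mult_right_iff)
      hence "\<bar>x\<bar> \<le> int d" using pos(2) dvd_imp_le_int[of "int d" x] by simp
      thus False using that(2) by simp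
    qed
    have "poly g (int n) dvd P ^ k * int d" using fP gh by (metis dvd_triv_left uminus_dvd_conv(2))
    hence Pg: "P dvd poly g (int n)" using Pdiv gbig by blast
    have "poly h (int n) dvd P ^ k * int d" using fP gh by (metis dvd_triv_right uminus_dvd_conv(2))
    hence Ph: "P dvd poly h (int n)" using Pdiv hbig by blast
    have g0: "poly g (int n) \<noteq> 0" and h0: "poly h (int n) \<noteq> 0" using gbig hbig by auto
    have mf: "multiplicity P (poly f (int n)) = k"
    proof -
      have "poly f (int n) = P ^ k * int d \<or> poly f (int n) = P ^ k * (- int d)" using fP by simp
      moreover have "\<not> P dvd (- int d)" using Pd by simp
      moreover have "int d \<noteq> 0" using pos(2) by simp
      ultimately show ?thesis using P Pd multiplicity_decomposeI not_prime_0
        by (metis neg_equal_0_iff_equal)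
    qed
    have mgh: "multiplicity P (poly g (int n)) + multiplicity P (poly h (int n)) = k"
      using mf unfolding gh[symmetric] using prime_elem_multiplicity_mult_distrib[OF prime_imp_prime_elem[OF P] g0 h0]
      by simp
    have a1: "multiplicity P (poly g (int n)) \<ge> 1"
      using Pg P g0 by (intro multiplicity_geI) (auto simp: not_prime_unit)
    have b1: "multiplicity P (poly h (int n)) \<ge> 1"
      using Ph P h0 by (intro multiplicity_geI) (auto simp: not_prime_unit)
    have k1: "k > 1" using a1 b1 mgh by linarith
    define G where "G = pcompose g [:int n, 1:]"
    define H where "H = pcompose h [:int n, 1:]"
    have GH: "G * H = pcompose f [:int n, 1:]" unfolding G_def H_def fgh by (simp add: pcompose_mult)
    have cG: "coeff G 0 = poly g (int n)" unfolding G_def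
      by (simp add: poly_0_coeff_0[symmetric] poly_pcompose)
    have cH: "coeff H 0 = poly h (int n)" unfolding H_def
      by (simp add: poly_0_coeff_0[symmetric] poly_pcompose)
    have G0: "G \<noteq> 0" using cG g0 by auto
    have H0: "H \<noteq> 0" using cH h0 by auto
    have coplk: "coprime l k" using cop by (simp add: coprime_iff_gcd_eq_1 gcd.commute)
    have mid: "P ^ k dvd coeff (G * H) i" if "0 < i" "i < l" for i
      using dvd[of i] that unfolding GH taylor_coeff P_def by simp
    have top: "\<not> P dvd coeff (G * H) l"
      using ndvd[OF k1] unfolding GH taylor_coeff P_def by simp
    show False
      using core[OF P G0 H0 pos(3) pos(4) coplk] cG cH g0 h0 a1 b1 mgh mid top by simp
  qed
qed

end
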